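(* Let $m\ge3$, let $w_0^2(m)=\big(\sum_{l=1}^{m-1}\frac{m-l}{l^2}\big)^{-1}$, for $k\ge0$ let $w_{k+1}^2(m)=w_k^2(m)+\big(\sum_{l=1}^{m-1}\frac{m-l}{l^2-w_k^2(m)}\big)^{-1}$ with $w_k(m)>0$, and put $\varepsilon_k(m)=1-w_k(m)$ and $q(m)=\frac{7m-6}{7m-4}$. Then for all $k=0,1,2,\dots$, $$\varepsilon_{k+1}(m)<\varepsilon_k(m)\,q(m),$$ and consequently $\varepsilon_{k+1}(m)<\varepsilon_0(m)\,q(m)^k$, where $\varepsilon_0(m)=1-\big[m\frac{\pi^2}{6}-m\psi'(m)-\gamma-\psi(m)\big]^{-1/2}\in(0,1)$.
   Context: $\psi$ denotes the digamma function and $\gamma$ the Euler–Mascheroni constant. *)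

theory Defs
  imports "HOL-Analysis.Analysis"
begin

fun wsq :: "nat \<Rightarrow> nat \<Rightarrow> real" where
  "wsq m 0 = 1 / (\<Sum>l=1..m-1. (real m - real l) / (real l)^2)"
| "wsq m (Suc k) = wsq m k + 1 / (\<Sum>l=1..m-1. (real m - real l) / ((real l)^2 - wsq m k))"

definition w :: "nat \<Rightarrow> nat \<Rightarrow> real" where
  "w m k = sqrt (wsq m k)"

definition eps :: "nat \<Rightarrow> nat \<Rightarrow> real" where
  "eps m k = 1 - w m k"

definition q :: "nat \<Rightarrow> real" where
  "q m = (7 * real m - 6) / (7 * real m - 4)"

end

theory Submission
  imports Defs
begin

lemma tele: "n \<ge> 1 \<Longrightarrow> (\<Sum>l=2..n. 1 / (real l * (real l - 1))) = 1 - 1 / real n"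
proof (induction n rule: dec_induct)
  case base then show ?case by simp
next
  case (step n)
  have "{2..Suc n} = insert (Suc n) {2..n}" using step.hyps by auto
  then have "(\<Sum>l=2..Suc n. 1 / (real l * (real l - 1))) = 1 / (real (Suc n) * (real (Suc n) - 1)) + (\<Sum>l=2..n. 1 / (real l * (real l - 1)))"
    by simp
  also have "\<dots> = 1 / (real (Suc n) * (real (Suc n) - 1)) + (1 - 1 / real n)" using step.IH by simp
  also have "\<dots> = 1 - 1 / real (Suc n)"
  proof -
    have n1: "real n \<ge> 1" using step.hyps by simp
    then have "real n + real n * real n \<noteq> 0" by (smt (verit) mult_nonneg_nonneg)
    then show ?thesis using n1 by (simp add: field_simps)
  qed
  finally show ?case .
qed

lemma Sbounds:
  fixes m :: nat and x :: real
  assumes m: "m \<ge> 3" and x0: "0 \<le> x" and x1: "x < 1"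
  shows "(real m - 1) / (1 - x) \<le> (\<Sum>l=1..m-1. (real m - real l) / ((real l)^2 - x))"
    and "(\<Sum>l=1..m-1. (real m - real l) / ((real l)^2 - x)) \<le> (real m - 1) / (1 - x) + real m"
proof -
  have split: "(\<Sum>l=1..m-1. (real m - real l) / ((real l)^2 - x)) =
      (real m - 1) / (1 - x) + (\<Sum>l=2..m-1. (real m - real l) / ((real l)^2 - x))"
  proof -
    have "{1..m-1} = insert 1 {2..m-1}" using m by auto
    then show ?thesis by simp
  qed
  have nn: "(real m - real l) / ((real l)^2 - x) \<ge> 0" if "l \<in> {2..m-1}" for l
  proof -
    have "real l \<ge> 2" using that by auto
    then have "(real l)^2 \<ge> 4" using power_mono[OF \<open>real l \<ge> 2\<close>, of 2] by simp
    moreover have "real l \<le> real m" using that by auto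
    ultimately show ?thesis using x1 by (intro divide_nonneg_pos) auto
  qed
  have ub: "(real m - real l) / ((real l)^2 - x) \<le> real m * (1 / (real l * (real l - 1)))" if "l \<in> {2..m-1}" for l
  proof -
    have l2: "real l \<ge> 2" using that by auto
    have lm: "real l \<le> real m" using that by auto
    have d: "(real l)^2 - x \<ge> real l * (real l - 1)" using l2 x1 by (simp add: power2_eq_square algebra_simps)
    have dp: "real l * (real l - 1) > 0" using l2 by simp
    have "(real m - real l) / ((real l)^2 - x) \<le> (real m - real l) / (real l * (real l - 1))"
      using d dp lm by (intro divide_left_mono) auto
    also have "\<dots> \<le> real m / (real l * (real l - 1))" using dp l2 by (intro divide_right_mono) auto
    finally show ?thesis by simp
  qed
  have "(\<Sum>l=2..m-1. (real m - real l) / ((real l)^2 - x)) \<le> (\<Sum>l=2..m-1. real m * (1 / (real l * (real l - 1))))"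
    by (rule sum_mono) (rule ub)
  also have "\<dots> = real m * (1 - 1 / real (m-1))" 
  proof -
    have "(\<Sum>l=2..m-1. real m * (1 / (real l * (real l - 1)))) = real m * (\<Sum>l=2..m-1. 1 / (real l * (real l - 1)))"
      by (simp add: sum_distrib_left)
    also have "\<dots> = real m * (1 - 1 / real (m-1))" using m by (subst tele) auto
    finally show ?thesis .
  qed
  also have "\<dots> \<le> real m" using m by simp
  finally have "(\<Sum>l=2..m-1. (real m - real l) / ((real l)^2 - x)) \<le> real m" .
  moreover have "(\<Sum>l=2..m-1. (real m - real l) / ((real l)^2 - x)) \<ge> 0" by (rule sum_nonneg) (rule nn)
  ultimately show "(real m - 1) / (1 - x) \<le> (\<Sum>l=1..m-1. (real m - real l) / ((real l)^2 - x))"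
    and "(\<Sum>l=1..m-1. (real m - real l) / ((real l)^2 - x)) \<le> (real m - 1) / (1 - x) + real m"
    using split by linarith+
qed

lemma stepl:
  fixes m :: nat and x :: real
  assumes m: "m \<ge> 3" and x0: "0 \<le> x" and x1: "x < 1"
  defines "S \<equiv> (\<Sum>l=1..m-1. (real m - real l) / ((real l)^2 - x))"
  shows "0 < 1 / S" "x + 1 / S < 1" "1 - sqrt (x + 1 / S) < (1 - sqrt x) * q m"
proof -
  have lb: "(real m - 1) / (1 - x) \<le> S" and ub: "S \<le> (real m - 1) / (1 - x) + real m"
    using Sbounds[OF m x0 x1] unfolding S_def by auto
  have mr: "real m \<ge> 3" using m by simp
  have lbp: "(real m - 1) / (1 - x) > 0" using mr x1 by simp
  then have Sp: "S > 0" using lb by linarith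
  then show "0 < 1 / S" by simp
  have "1 / S \<le> 1 / ((real m - 1) / (1 - x))" 
  proof -
    have "0 < S * (real m - 1) / (1 - x)" using Sp lbp by (metis mult_pos_pos times_divide_eq_right)
    then show ?thesis using lb lbp by (intro divide_left_mono) auto
  qed
  also have "\<dots> = (1 - x) / (real m - 1)" by simp
  also have "\<dots> < 1 - x" using mr x1 by (simp add: divide_less_eq)
  finally show "x + 1 / S < 1" by simp
  have "1 / S \<ge> 1 / ((real m - 1) / (1 - x) + real m)" using ub Sp by (intro divide_left_mono) auto
  also have "1 / ((real m - 1) / (1 - x) + real m) = (1 - x) / (real m - 1 + real m * (1 - x))"
    using x1 by (simp add: field_simps)
  also have "\<dots> \<ge> (1 - x) / (2 * real m - 1)"

  proof -
    have mx: "real m * x \<ge> 0" using x0 mr by simp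
    have mx1: "real m * x < real m" using mult_strict_left_mono[of x 1 "real m"] x1 mr by simp
    have rd: "real m * (1 - x) = real m - real m * x" by (simp add: right_diff_distrib)
    have a: "real m - 1 + real m * (1 - x) > 0" using mx1 mr rd by linarith
    have b: "2 * real m - 1 > 0" using mr by simp
    have c: "real m - 1 + real m * (1 - x) \<le> 2 * real m - 1" using mx rd by linarith
    have d: "0 < (2 * real m - 1) * (real m - 1 + real m * (1 - x))" by (rule mult_pos_pos[OF b a])
    show ?thesis by (rule divide_left_mono[OF c _ d]) (use x1 in simp)
  qed
  finally have iS: "1 / S \<ge> (1 - x) / (2 * real m - 1)" .
  define s where "s = sqrt x"
  define e where "e = 1 - s"
  have s0: "0 \<le> s" and s1: "s < 1" and sx: "s^2 = x" using x0 x1 unfolding s_def by (auto simp: real_sqrt_lt_1_iff)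
  have e0: "0 < e" and e1: "e \<le> 1" using s0 s1 unfolding e_def by auto
  have qdef: "q m = (7 * real m - 6) / (7 * real m - 4)" by (simp add: q_def)
  have q0: "0 < q m" and q1: "q m < 1" using mr unfolding qdef by (auto simp: divide_less_eq)
  have omq: "1 - q m = 2 / (7 * real m - 4)" using mr unfolding qdef by (simp add: field_simps)
  have id: "(1 - e * q m)^2 = s^2 + e * (1 - q m) * (2 - e - e * q m)"
    unfolding e_def by (simp add: power2_eq_square algebra_simps)
  have "e * (1 - q m) * (2 - e - e * q m) \<le> e * (1 - q m) * (2 - e)"
    using e0 q0 q1 by (intro mult_left_mono) auto
  also have "\<dots> = (1 - q m) * (1 - x)" unfolding e_def sx[symmetric] by (simp add: power2_eq_square algebra_simps)
  also have "\<dots> < (1 - x) / (2 * real m - 1)"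
  proof -
    have "1 - q m < 1 / (2 * real m - 1)" unfolding omq using mr by (simp add: field_simps)
    then show ?thesis using x1 by (simp add: divide_inverse mult.commute)
  qed
  finally have "(1 - e * q m)^2 < x + 1 / S" using id sx iS by linarith
  moreover have "0 \<le> 1 - e * q m" using e0 e1 q0 q1 by (smt (verit) mult_le_one)
  ultimately have "1 - e * q m < sqrt (x + 1 / S)" by (simp add: real_less_rsqrt)
  then show "1 - sqrt (x + 1 / S) < (1 - sqrt x) * q m" unfolding e_def s_def by (simp add: mult.commute)
qed

lemma wsq_bounds:
  assumes m: "m \<ge> 3"
  shows "0 < wsq m k \<and> wsq m k < 1"
proof (induction k)
  case 0
  have "0 < 1 / (\<Sum>l=1..m-1. (real m - real l) / ((real l)^2 - 0))" "0 + 1 / (\<Sum>l=1..m-1. (real m - real l) / ((real l)^2 - 0)) < 1"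
    using stepl(1,2)[OF m, of 0] by auto
  then show ?case by simp
next
  case (Suc k)
  have a: "0 \<le> wsq m k" "wsq m k < 1" using Suc by auto
  show ?case unfolding wsq.simps using stepl(1,2)[OF m a] a by (intro conjI) linarith+
qed

lemma eps_step:
  assumes m: "m \<ge> 3"
  shows "eps m (Suc k) < eps m k * q m"
  using stepl(3)[OF m, of "wsq m k"] wsq_bounds[OF m, of k]
  by (simp add: eps_def w_def)

lemma sum_shift1: "(\<Sum>l=1..n. f l) = (\<Sum>k<n. f (Suc k))"
  by (induction n) (auto simp: atLeastAtMostSuc_conv add.commute)

lemma S0_formula:
  fixes m :: nat
  assumes m: "m \<ge> 3"
  shows "(\<Sum>l=1..m-1. (real m - real l) / (real l)^2) = real m * pi^2 / 6 - real m * Polygamma 1 (real m)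
                        - euler_mascheroni - Digamma (real m)"
proof -
  define n where "n = m - 1"
  have mn: "m = Suc n" using m unfolding n_def by simp
  define A where "A = (\<Sum>k<n. 1 / (real k + 1)^2)"
  define B where "B = (\<Sum>k<n. 1 / (real k + 1))"
  have S: "(\<Sum>l=1..m-1. (real m - real l) / (real l)^2) = real m * A - B"
  proof -
    have "(\<Sum>l=1..m-1. (real m - real l) / (real l)^2) = (\<Sum>k<n. (real m - real (Suc k)) / (real (Suc k))^2)"
      unfolding n_def by (rule sum_shift1)
    also have "\<dots> = (\<Sum>k<n. real m * (1 / (real k + 1)^2) - 1 / (real k + 1))"
    proof (intro sum.cong refl)
      fix k assume "k \<in> {..<n}"
      have kp: "real k + 1 > 0" by simp
      have "(real m - real (Suc k)) / (real (Suc k))^2 = real m / (real k + 1)^2 - (real k + 1) / (real k + 1)^2"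
        by (simp add: diff_divide_distrib add.commute)
      also have "(real k + 1) / (real k + 1)^2 = 1 / (real k + 1)" using kp by (simp add: power2_eq_square)
      finally show "(real m - real (Suc k)) / (real (Suc k))^2 = real m * (1 / (real k + 1)^2) - 1 / (real k + 1)" by simp
    qed
    also have "\<dots> = real m * A - B" unfolding A_def B_def by (simp add: sum_subtractf sum_distrib_left)
    finally show ?thesis .
  qed
  have D: "Digamma (real m) = B - euler_mascheroni"
  proof -
    have "Digamma (real m) = harm n - euler_mascheroni" unfolding mn of_nat_Suc[symmetric] by (rule Digamma_of_nat)
    moreover have "harm n = B" unfolding harm_altdef B_def by (simp add: inverse_eq_divide add.commute)
    ultimately show ?thesis by simp
  qed
  have P1: "Polygamma 1 (1::real) = pi^2 / 6"
  proof -
    have "Polygamma 1 (1::real) = (\<Sum>k. inverse ((1 + real k)^2))" by (simp add: Polygamma_def power2_eq_square)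
    also have "\<dots> = (\<Sum>k. 1 / (real k + 1)^2)" by (simp add: inverse_eq_divide add.commute)
    also have "\<dots> = pi^2 / 6" using inverse_squares_sums by (simp add: sums_iff add.commute)
    finally show ?thesis .
  qed
  have P: "Polygamma 1 (real m) = pi^2 / 6 - A"
  proof -
    have "Polygamma 1 (1 + real n) = Polygamma 1 1 + (-1) ^ 1 * fact 1 * (\<Sum>k<n. 1 / (1 + real k) ^ Suc 1)"
      by (rule Polygamma_plus_of_nat) auto
    then show ?thesis unfolding mn P1 A_def by (simp add: add.commute power2_eq_square)
  qed
  show ?thesis unfolding S D P by (simp add: algebra_simps)
qed

theorem corollary4:
  fixes m :: nat
  assumes "m \<ge> 3"
  shows "(\<forall>k. eps m (Suc k) < eps m k * q m)
    \<and> (\<forall>k. eps m (Suc k) < eps m 0 * q m ^ k)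
    \<and> eps m 0 = 1 - (real m * pi^2 / 6 - real m * Polygamma 1 (real m)
                        - euler_mascheroni - Digamma (real m)) powr (-1/2)
    \<and> 0 < eps m 0 \<and> eps m 0 < 1"
proof -
  note m = assms
  have st: "\<forall>k. eps m (Suc k) < eps m k * q m" using eps_step[OF m] by blast
  have epos: "eps m k > 0" for k using wsq_bounds[OF m, of k] by (simp add: eps_def w_def real_sqrt_lt_1_iff)
  have e1: "eps m 0 < 1" using wsq_bounds[OF m, of 0] by (simp add: eps_def w_def)
  have mr: "real m \<ge> 3" using m by simp
  have q0: "0 < q m" and q1: "q m < 1" using mr unfolding q_def by (auto simp: divide_less_eq)
  have bnd: "eps m k \<le> eps m 0 * q m ^ k" for k
  proof (induction k)
    case (Suc k)
    have "eps m (Suc k) < eps m k * q m" using st by blast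
    also have "\<dots> \<le> eps m 0 * q m ^ k * q m" using Suc q0 by (intro mult_right_mono) auto
    finally show ?case by (simp add: mult_ac)
  qed simp
  have st2: "\<forall>k. eps m (Suc k) < eps m 0 * q m ^ k"
  proof
    fix k
    have "eps m (Suc k) < eps m k * q m" using st by blast
    also have "\<dots> \<le> eps m k" using epos[of k] q1 by (simp add: mult_le_cancel_left1)
    also have "\<dots> \<le> eps m 0 * q m ^ k" by (rule bnd)
    finally show "eps m (Suc k) < eps m 0 * q m ^ k" .
  qed
  define SS where "SS = (\<Sum>l=1..m-1. (real m - real l) / (real l)^2)"
  have w0: "wsq m 0 = 1 / SS" unfolding SS_def wsq.simps by simp
  have "0 < 1 / SS" using wsq_bounds[OF m, of 0] unfolding w0 by blast
  then have SSp: "SS > 0" by (simp add: zero_less_divide_iff)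
  have "eps m 0 = 1 - sqrt (1 / SS)" unfolding eps_def w_def w0 by simp
  also have "sqrt (1 / SS) = SS powr (-1/2)"
    using SSp by (simp add: powr_minus_divide powr_half_sqrt real_sqrt_divide)
  finally have ef: "eps m 0 = 1 - (real m * pi^2 / 6 - real m * Polygamma 1 (real m)
                        - euler_mascheroni - Digamma (real m)) powr (-1/2)"
    unfolding SS_def S0_formula[OF m] .
  show ?thesis using st st2 ef epos[of 0] e1 by blast
qed

end
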